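(* Let $X_r$ be a Dynkin diagram of finite type, $\ell\ge2$, and $U$ either $\mathbb{C}$ or $\mathbb{C}_\xi$. The assignment $Y^{(a)}_m(u)\mapsto \dfrac{M^{(a)}_m(u)}{T^{(a)}_{m-1}(u)T^{(a)}_{m+1}(u)}$ ($a\in I$, $1\le m\le t_a\ell-1$, $u\in U$), where $T^{(0)}_k(u)=T^{(a)}_0(u)=T^{(a)}_{t_a\ell}(u)=1$, defines a ring homomorphism $\varphi_\ell:\mathcal{Y}_\ell(X_r)\to\mathcal{T}_\ell(X_r)$.
   Context: Rings are commutative with identity. $\mathbb{C}_\xi:=\mathbb{C}/(2\pi\sqrt{-1}/\xi)\mathbb{Z}$, $\xi\in\mathbb{C}\setminus2\pi\sqrt{-1}\mathbb{Q}$. Enumeration of $I=\{1,\dots,r\}$: $A_r$: chain; $B_r$: chain with double bond between $r-1,r$, $\alpha_r$ short; $C_r$: same, $\alpha_r$ long, others short; $D_r$: chain $1-\cdots-(r-2)$, $r-1,r$ joined to $r-2$; $E_6$: chain $1-2-3-5-6$, $4$ joined to $3$; $E_7$: chain $1-\cdots-6$, $7$ joined to $3$; $E_8$: chain $1-\cdots-7$, $8$ joined to $5$; $F_4$: chain $1-2-3-4$, double bond between $2,3$, $\alpha_1,\alpha_2$ long; $G_2$: $\alpha_1$ long. $C$ Cartan matrix; $t_a=2$ for short $a$ in $B_r,C_r,F_4$, $t_2=3$ in $G_2$, else $1$. $M^{(a)}_m(u)$: simply laced $\prod_{b:C_{ab}=-1}T^{(b)}_m(u)$; $B_r$: $T^{(a-1)}_m(u)T^{(a+1)}_m(u)$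 ($a\le r-2$), $M^{(r-1)}_m=T^{(r-2)}_m(u)T^{(r)}_{2m}(u)$, $M^{(r)}_{2m}=T^{(r-1)}_m(u-\frac12)T^{(r-1)}_m(u+\frac12)$, $M^{(r)}_{2m+1}=T^{(r-1)}_m(u)T^{(r-1)}_{m+1}(u)$; $C_r$: $T^{(a-1)}_m(u)T^{(a+1)}_m(u)$ ($a\le r-2$), $M^{(r-1)}_{2m}=T^{(r-2)}_{2m}(u)T^{(r)}_m(u-\frac12)T^{(r)}_m(u+\frac12)$, $M^{(r-1)}_{2m+1}=T^{(r-2)}_{2m+1}(u)T^{(r)}_m(u)T^{(r)}_{m+1}(u)$, $M^{(r)}_m=T^{(r-1)}_{2m}(u)$; $F_4$: $M^{(1)}_m=T^{(2)}_m$, $M^{(2)}_m=T^{(1)}_m(u)T^{(3)}_{2m}(u)$, $M^{(3)}_{2m}=T^{(2)}_m(u-\frac12)T^{(2)}_m(u+\frac12)T^{(4)}_{2m}(u)$, $M^{(3)}_{2m+1}=T^{(2)}_m(u)T^{(2)}_{m+1}(u)T^{(4)}_{2m+1}(u)$, $M^{(4)}_m=T^{(3)}_m(u)$; $G_2$: $M^{(1)}_m=T^{(2)}_{3m}(u)$, $M^{(2)}_{3m}=T^{(1)}_m(u-\frac23)T^{(1)}_m(u)T^{(1)}_m(u+\frac23)$, $M^{(2)}_{3m+1}=T^{(1)}_m(u-\frac13)T^{(1)}_m(u+\frac13)T^{(1)}_{m+1}(u)$, $M^{(2)}_{3m+2}=T^{(1)}_m(u)T^{(1)}_{m+1}(u-\frac13)T^{(1)}_{m+1}(u+\frac13)$.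 $\mathcal{T}_\ell(X_r)$: ring with generators $T^{(a)}_m(u)^{\pm1}$ ($1\le m\le t_a\ell-1$) and relations $T^{(a)}_m(u-\tfrac1{t_a})T^{(a)}_m(u+\tfrac1{t_a})=T^{(a)}_{m-1}(u)T^{(a)}_{m+1}(u)+M^{(a)}_m(u)$ for $a\in I$, $1\le m\le t_a\ell-1$, $u\in U$, where $T^{(0)}_k=T^{(a)}_0=T^{(a)}_{t_a\ell}=1$. $\mathcal{Y}_\ell(X_r)$: ring with generators $Y^{(a)}_m(u)^{\pm1}$, $(1+Y^{(a)}_m(u))^{-1}$ ($a\in I$, $1\le m\le t_a\ell-1$, $u\in U$) and relations, for the same range, $Y^{(a)}_m(u-\tfrac1{t_a})Y^{(a)}_m(u+\tfrac1{t_a})=\dfrac{N^{(a)}_m(u)}{(1+Y^{(a)}_{m-1}(u)^{-1})(1+Y^{(a)}_{m+1}(u)^{-1})}$, where $Y^{(0)}_k=0$, $Y^{(a)}_0(u)^{-1}=Y^{(a)}_{t_a\ell}(u)^{-1}=0$, and: simply laced $N^{(a)}_m=\prod_{b:C_{ab}=-1}(1+Y^{(b)}_m(u))$; $B_r$: $(1+Y^{(a-1)}_m(u))(1+Y^{(a+1)}_m(u))$ ($a\le r-2$), $N^{(r-1)}_m=(1+Y^{(r-2)}_m(u))(1+Y^{(r)}_{2m-1}(u))(1+Y^{(r)}_{2m+1}(u))(1+Y^{(r)}_{2m}(u-\frac12))(1+Y^{(r)}_{2m}(u+\frac12))$, $N^{(r)}_{2m}=1+Y^{(r-1)}_m(u)$,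 $N^{(r)}_{2m+1}=1$; $C_r$: $(1+Y^{(a-1)}_m(u))(1+Y^{(a+1)}_m(u))$ ($a\le r-2$), $N^{(r-1)}_{2m}=(1+Y^{(r-2)}_{2m}(u))(1+Y^{(r)}_m(u))$, $N^{(r-1)}_{2m+1}=1+Y^{(r-2)}_{2m+1}(u)$, $N^{(r)}_m=(1+Y^{(r-1)}_{2m-1}(u))(1+Y^{(r-1)}_{2m+1}(u))(1+Y^{(r-1)}_{2m}(u-\frac12))(1+Y^{(r-1)}_{2m}(u+\frac12))$; $F_4$: $N^{(1)}_m=1+Y^{(2)}_m(u)$, $N^{(2)}_m=(1+Y^{(1)}_m(u))(1+Y^{(3)}_{2m-1}(u))(1+Y^{(3)}_{2m+1}(u))(1+Y^{(3)}_{2m}(u-\frac12))(1+Y^{(3)}_{2m}(u+\frac12))$, $N^{(3)}_{2m}=(1+Y^{(2)}_m(u))(1+Y^{(4)}_{2m}(u))$, $N^{(3)}_{2m+1}=1+Y^{(4)}_{2m+1}(u)$, $N^{(4)}_m=1+Y^{(3)}_m(u)$; $G_2$: $N^{(1)}_m=(1+Y^{(2)}_{3m-2}(u))(1+Y^{(2)}_{3m+2}(u))(1+Y^{(2)}_{3m}(u))\prod_{\epsilon=\pm1}(1+Y^{(2)}_{3m-1}(u+\frac\epsilon3))(1+Y^{(2)}_{3m+1}(u+\frac\epsilon3))(1+Y^{(2)}_{3m}(u+\frac{2\epsilon}3))$, $N^{(2)}_{3m}=1+Y^{(1)}_m(u)$, $N^{(2)}_{3m+1}=N^{(2)}_{3m+2}=1$.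 *)

theory Defs
  imports Complex_Main
begin

datatype dynkin = A nat | B nat | C nat | D nat | E6 | E7 | E8 | F4 | G2

fun rank :: "dynkin \<Rightarrow> nat" where
  "rank (A r) = r" | "rank (B r) = r" | "rank (C r) = r" | "rank (D r) = r"
| "rank E6 = 6" | "rank E7 = 7" | "rank E8 = 8" | "rank F4 = 4" | "rank G2 = 2"

fun finite_type :: "dynkin \<Rightarrow> bool" where
  "finite_type (A r) = (r \<ge> 1)"
| "finite_type (B r) = (r \<ge> 2)"
| "finite_type (C r) = (r \<ge> 2)"
| "finite_type (D r) = (r \<ge> 4)"
| "finite_type _ = True"

definition index_set :: "dynkin \<Rightarrow> nat set" where
  "index_set X = {1..rank X}"

text \<open>Adjacency (C_ab = -1) for the simply laced diagrams, with the paper's enumeration.\<close>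
definition edge :: "nat \<Rightarrow> nat \<Rightarrow> nat \<Rightarrow> nat \<Rightarrow> bool" where
  "edge i j a b = ((a = i \<and> b = j) \<or> (a = j \<and> b = i))"

fun adj :: "dynkin \<Rightarrow> nat \<Rightarrow> nat \<Rightarrow> bool" where
  "adj (A r) a b = (a \<in> {1..r} \<and> b \<in> {1..r} \<and> (a = b + 1 \<or> b = a + 1))"
| "adj (D r) a b = (a \<in> {1..r} \<and> b \<in> {1..r} \<and>
      (((a = b + 1 \<or> b = a + 1) \<and> a \<le> r - 2 \<and> b \<le> r - 2)
       \<or> edge (r - 1) (r - 2) a b \<or> edge r (r - 2) a b))"
| "adj E6 a b = (edge 1 2 a b \<or> edge 2 3 a b \<or> edge 3 5 a b \<or> edge 5 6 a b \<or> edge 4 3 a b)"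
| "adj E7 a b = (a \<in> {1..7} \<and> b \<in> {1..7} \<and>
      (((a = b + 1 \<or> b = a + 1) \<and> a \<le> 6 \<and> b \<le> 6) \<or> edge 7 3 a b))"
| "adj E8 a b = (a \<in> {1..8} \<and> b \<in> {1..8} \<and>
      (((a = b + 1 \<or> b = a + 1) \<and> a \<le> 7 \<and> b \<le> 7) \<or> edge 8 5 a b))"
| "adj _ a b = False"

fun tnum :: "dynkin \<Rightarrow> nat \<Rightarrow> nat" where
  "tnum (B r) a = (if a = r then 2 else 1)"
| "tnum (C r) a = (if a < r then 2 else 1)"
| "tnum F4 a = (if a = 3 \<or> a = 4 then 2 else 1)"
| "tnum G2 a = (if a = 2 then 3 else 1)"
| "tnum _ a = 1"

text \<open>U = C is encoded by period p = 0; U = C_xi = C / (2 pi i / xi) Z is encoded by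
  p = 2 pi i / xi with xi not in 2 pi i Q.  A function on U is a p-periodic function on C.\<close>
definition valid_period :: "complex \<Rightarrow> bool" where
  "valid_period p \<longleftrightarrow> p = 0 \<or>
     (\<exists>\<xi>::complex. \<xi> \<notin> {2 * of_real pi * \<i> * of_rat q | q. True} \<and> p = 2 * of_real pi * \<i> / \<xi>)"

definition uinv :: "'a::comm_ring_1 \<Rightarrow> 'a" where
  "uinv x = (SOME y. x * y = 1)"

definition Tb :: "dynkin \<Rightarrow> nat \<Rightarrow> (nat \<Rightarrow> nat \<Rightarrow> complex \<Rightarrow> 'a::comm_ring_1)
    \<Rightarrow> nat \<Rightarrow> nat \<Rightarrow> complex \<Rightarrow> 'a" where
  "Tb X l T a m u = (if a = 0 \<or> m = 0 \<or> m = tnum X a * l then 1 else T a m u)"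

fun Mfun :: "dynkin \<Rightarrow> (nat \<Rightarrow> nat \<Rightarrow> complex \<Rightarrow> 'a::comm_ring_1)
    \<Rightarrow> nat \<Rightarrow> nat \<Rightarrow> complex \<Rightarrow> 'a" where
  "Mfun (B r) T a m u =
     (if a \<le> r - 2 then T (a - 1) m u * T (a + 1) m u
      else if a = r - 1 then T (r - 2) m u * T r (2 * m) u
      else if even m then T (r - 1) (m div 2) (u - 1/2) * T (r - 1) (m div 2) (u + 1/2)
      else T (r - 1) (m div 2) u * T (r - 1) (m div 2 + 1) u)"
| "Mfun (C r) T a m u =
     (if a \<le> r - 2 then T (a - 1) m u * T (a + 1) m u
      else if a = r - 1 then
        (if even m then T (r - 2) m u * T r (m div 2) (u - 1/2) * T r (m div 2) (u + 1/2)
         else T (r - 2) m u * T r (m div 2) u * T r (m div 2 + 1) u)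
      else T (r - 1) (2 * m) u)"
| "Mfun F4 T a m u =
     (if a = 1 then T 2 m u
      else if a = 2 then T 1 m u * T 3 (2 * m) u
      else if a = 3 then
        (if even m then T 2 (m div 2) (u - 1/2) * T 2 (m div 2) (u + 1/2) * T 4 m u
         else T 2 (m div 2) u * T 2 (m div 2 + 1) u * T 4 m u)
      else T 3 m u)"
| "Mfun G2 T a m u =
     (if a = 1 then T 2 (3 * m) u
      else if m mod 3 = 0 then
        T 1 (m div 3) (u - 2/3) * T 1 (m div 3) u * T 1 (m div 3) (u + 2/3)
      else if m mod 3 = 1 then
        T 1 (m div 3) (u - 1/3) * T 1 (m div 3) (u + 1/3) * T 1 (m div 3 + 1) u
      else T 1 (m div 3) u * T 1 (m div 3 + 1) (u - 1/3) * T 1 (m div 3 + 1) (u + 1/3))"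
| "Mfun X T a m u = (\<Prod>b\<in>{b \<in> index_set X. adj X a b}. T b m u)"

text \<open>T is a family of elements of a commutative ring R indexed by the generators of
  the ring T_l(X_r) (a in I, 1 <= m <= t_a l - 1, u in U) satisfying its defining relations
  (all generators invertible, T-system relations).\<close>
definition T_system :: "dynkin \<Rightarrow> nat \<Rightarrow> complex \<Rightarrow> (nat \<Rightarrow> nat \<Rightarrow> complex \<Rightarrow> 'a::comm_ring_1) \<Rightarrow> bool" where
  "T_system X l p T \<longleftrightarrow>
     (\<forall>a\<in>index_set X. \<forall>m. 1 \<le> m \<and> m \<le> tnum X a * l - 1 \<longrightarrow> (\<forall>u.
        T a m (u + p) = T a m u \<and>
        (T a m u) dvd 1 \<and>
        T a m (u - 1 / of_nat (tnum X a)) * T a m (u + 1 / of_nat (tnum X a)) =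
          Tb X l T a (m - 1) u * Tb X l T a (m + 1) u + Mfun X (Tb X l T) a m u))"

definition Y0 :: "(nat \<Rightarrow> nat \<Rightarrow> complex \<Rightarrow> 'a::comm_ring_1) \<Rightarrow> nat \<Rightarrow> nat \<Rightarrow> complex \<Rightarrow> 'a" where
  "Y0 Y a m u = (if a = 0 then 0 else Y a m u)"

definition Yinvb :: "dynkin \<Rightarrow> nat \<Rightarrow> (nat \<Rightarrow> nat \<Rightarrow> complex \<Rightarrow> 'a::comm_ring_1)
    \<Rightarrow> nat \<Rightarrow> nat \<Rightarrow> complex \<Rightarrow> 'a" where
  "Yinvb X l Y a m u = (if m = 0 \<or> m = tnum X a * l then 0 else uinv (Y a m u))"

fun Nfun :: "dynkin \<Rightarrow> (nat \<Rightarrow> nat \<Rightarrow> complex \<Rightarrow> 'a::comm_ring_1)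
    \<Rightarrow> nat \<Rightarrow> nat \<Rightarrow> complex \<Rightarrow> 'a" where
  "Nfun (B r) Y a m u =
     (if a \<le> r - 2 then (1 + Y (a - 1) m u) * (1 + Y (a + 1) m u)
      else if a = r - 1 then
        (1 + Y (r - 2) m u) * (1 + Y r (2 * m - 1) u) * (1 + Y r (2 * m + 1) u)
        * (1 + Y r (2 * m) (u - 1/2)) * (1 + Y r (2 * m) (u + 1/2))
      else if even m then 1 + Y (r - 1) (m div 2) u
      else 1)"
| "Nfun (C r) Y a m u =
     (if a \<le> r - 2 then (1 + Y (a - 1) m u) * (1 + Y (a + 1) m u)
      else if a = r - 1 then
        (if even m then (1 + Y (r - 2) m u) * (1 + Y r (m div 2) u)
         else 1 + Y (r - 2) m u)
      else (1 + Y (r - 1) (2 * m - 1) u) * (1 + Y (r - 1) (2 * m + 1) u)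
        * (1 + Y (r - 1) (2 * m) (u - 1/2)) * (1 + Y (r - 1) (2 * m) (u + 1/2)))"
| "Nfun F4 Y a m u =
     (if a = 1 then 1 + Y 2 m u
      else if a = 2 then
        (1 + Y 1 m u) * (1 + Y 3 (2 * m - 1) u) * (1 + Y 3 (2 * m + 1) u)
        * (1 + Y 3 (2 * m) (u - 1/2)) * (1 + Y 3 (2 * m) (u + 1/2))
      else if a = 3 then
        (if even m then (1 + Y 2 (m div 2) u) * (1 + Y 4 m u) else 1 + Y 4 m u)
      else 1 + Y 3 m u)"
| "Nfun G2 Y a m u =
     (if a = 1 then
        (1 + Y 2 (3 * m - 2) u) * (1 + Y 2 (3 * m + 2) u) * (1 + Y 2 (3 * m) u)
        * (\<Prod>\<epsilon>\<in>{-1, 1::complex}.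
             (1 + Y 2 (3 * m - 1) (u + \<epsilon> / 3)) * (1 + Y 2 (3 * m + 1) (u + \<epsilon> / 3))
             * (1 + Y 2 (3 * m) (u + 2 * \<epsilon> / 3)))
      else if m mod 3 = 0 then 1 + Y 1 (m div 3) u
      else 1)"
| "Nfun X Y a m u = (\<Prod>b\<in>{b \<in> index_set X. adj X a b}. 1 + Y b m u)"

text \<open>Y is a family of elements of R indexed by the generators of Y_l(X_r) satisfying its
  defining relations: Y and 1+Y invertible (the generators Y^(+-1) and (1+Y)^(-1)),
  and the Y-system relations.\<close>
definition Y_system :: "dynkin \<Rightarrow> nat \<Rightarrow> complex \<Rightarrow> (nat \<Rightarrow> nat \<Rightarrow> complex \<Rightarrow> 'a::comm_ring_1) \<Rightarrow> bool" where
  "Y_system X l p Y \<longleftrightarrow>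
     (\<forall>a\<in>index_set X. \<forall>m. 1 \<le> m \<and> m \<le> tnum X a * l - 1 \<longrightarrow> (\<forall>u.
        Y a m (u + p) = Y a m u \<and>
        (Y a m u) dvd 1 \<and>
        (1 + Y a m u) dvd 1 \<and>
        Y a m (u - 1 / of_nat (tnum X a)) * Y a m (u + 1 / of_nat (tnum X a)) =
          Nfun X (Y0 Y) a m u *
          uinv ((1 + Yinvb X l Y a (m - 1) u) * (1 + Yinvb X l Y a (m + 1) u))))"

definition phiY :: "dynkin \<Rightarrow> nat \<Rightarrow> (nat \<Rightarrow> nat \<Rightarrow> complex \<Rightarrow> 'a::comm_ring_1)
    \<Rightarrow> nat \<Rightarrow> nat \<Rightarrow> complex \<Rightarrow> 'a" where
  "phiY X l T a m u =
     Mfun X (Tb X l T) a m u * uinv (Tb X l T a (m - 1) u) * uinv (Tb X l T a (m + 1) u)"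

end

theory Submission
  imports Defs
begin

lemma uinv_r: "(x::'a::comm_ring_1) dvd 1 \<Longrightarrow> x * uinv x = 1"
proof -
  assume "x dvd 1"
  then obtain k where "1 = x * k" by (auto elim: dvdE)
  then have "x * k = 1" by simp
  then show ?thesis unfolding uinv_def by (rule someI)
qed

lemma uinv_l: "(x::'a::comm_ring_1) dvd 1 \<Longrightarrow> uinv x * x = 1"
  using uinv_r by (metis mult.commute)

lemma uinv_unique: "(x::'a::comm_ring_1) * y = 1 \<Longrightarrow> uinv x = y"
proof -
  assume h: "x * y = 1"
  then have u: "x dvd 1" by (metis dvd_triv_left)
  have "uinv x = uinv x * (x * y)" using h by simp
  also have "\<dots> = (x * uinv x) * y" by (simp add: ac_simps)
  also have "\<dots> = y" using uinv_r[OF u] by simp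
  finally show ?thesis .
qed

lemma uinv_dvd: "(x::'a::comm_ring_1) dvd 1 \<Longrightarrow> uinv x dvd 1"
  using uinv_r by (metis dvd_triv_right)

lemma uinv_mult: "(x::'a::comm_ring_1) dvd 1 \<Longrightarrow> y dvd 1 \<Longrightarrow> uinv (x * y) = uinv x * uinv y"
proof -
  assume a: "x dvd 1" "y dvd 1"
  have "x * y * (uinv x * uinv y) = (x * uinv x) * (y * uinv y)" by (simp add: ac_simps)
  then have "x * y * (uinv x * uinv y) = 1" using uinv_r[OF a(1)] uinv_r[OF a(2)] by simp
  then show ?thesis by (rule uinv_unique)
qed

lemma uinv_uinv: "(x::'a::comm_ring_1) dvd 1 \<Longrightarrow> uinv (uinv x) = x"
  by (rule uinv_unique) (rule uinv_l)

lemma uinv_1[simp]: "uinv (1::'a::comm_ring_1) = 1"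
  by (rule uinv_unique) simp

lemma unit_mult: "(x::'a::comm_ring_1) dvd 1 \<Longrightarrow> y dvd 1 \<Longrightarrow> x * y dvd 1"
  using mult_dvd_mono[of x 1 y 1] by simp

lemma unit_cancel: "(u::'a::comm_ring_1) dvd 1 \<Longrightarrow> x * u = y * u \<Longrightarrow> x = y"
proof -
  assume a: "u dvd 1" "x * u = y * u"
  have "x = x * u * uinv u" using uinv_r[OF a(1)] by (simp add: mult.assoc)
  also have "\<dots> = y * u * uinv u" using a(2) by simp
  also have "\<dots> = y" using uinv_r[OF a(1)] by (simp add: mult.assoc)
  finally show ?thesis .
qed

definition sl :: "dynkin \<Rightarrow> bool" where
  "sl Z \<longleftrightarrow> (\<exists>r. Z = A r \<or> Z = D r) \<or> Z = E6 \<or> Z = E7 \<or> Z = E8"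

lemma sl_simps: fixes X :: dynkin assumes "sl X"
  shows "\<And>F a m u. Mfun X F a m u = (\<Prod>b\<in>{b \<in> index_set X. adj X a b}. F b m u)"
    "\<And>F a m u. Nfun X F a m u = (\<Prod>b\<in>{b \<in> index_set X. adj X a b}. 1 + F b m u)"
    "\<And>b. tnum X b = 1"
  using assms unfolding sl_def by auto

lemma prod_unit: "(\<And>b. b \<in> S \<Longrightarrow> f b dvd 1) \<Longrightarrow> prod f S dvd (1::'a::comm_ring_1)"
  using prod_dvd_prod[of S f "\<lambda>_. 1"] by simp

locale tsys =
  fixes X :: dynkin and l :: nat and p :: complex and T :: "nat \<Rightarrow> nat \<Rightarrow> complex \<Rightarrow> 'r::comm_ring_1"
  assumes ft: "finite_type X" and l2: "2 \<le> l" and TS: "T_system X l p T"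
begin

abbreviation "TT \<equiv> Tb X l T"
abbreviation "YY \<equiv> phiY X l T"

lemma tnum_pos: "tnum X a \<ge> 1" by (cases X) auto

lemma TS_at: assumes "a \<in> index_set X" "1 \<le> m" "m \<le> tnum X a * l - 1"
  shows "T a m (u + p) = T a m u" "T a m u dvd 1"
   "T a m (u - 1 / of_nat (tnum X a)) * T a m (u + 1 / of_nat (tnum X a)) =
          Tb X l T a (m - 1) u * Tb X l T a (m + 1) u + Mfun X (Tb X l T) a m u"
  using TS assms unfolding T_system_def by blast+

lemma tl_ge: "tnum X a * l \<ge> 2"
proof -
  have "1 * 2 \<le> tnum X a * l" using tnum_pos[of a] l2 by (intro mult_mono) auto
  then show ?thesis by simp
qed

lemma TT0[simp]: "TT 0 m u = 1" unfolding Tb_def by simp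

lemma TT_unit: "a \<in> index_set X \<Longrightarrow> m \<le> tnum X a * l \<Longrightarrow> TT a m u dvd 1"
  using TS_at(2)[of a m u] unfolding Tb_def by auto

lemma TT_per: "a \<in> index_set X \<Longrightarrow> m \<le> tnum X a * l \<Longrightarrow> TT a m (v + p) = TT a m v"
  using TS_at(1)[of a m v] unfolding Tb_def by auto

lemma TT_per2: "a \<in> index_set X \<Longrightarrow> m \<le> tnum X a * l \<Longrightarrow> TT a m (v + p - c) = TT a m (v - c)"
  "a \<in> index_set X \<Longrightarrow> m \<le> tnum X a * l \<Longrightarrow> TT a m (v + p + c) = TT a m (v + c)"
  using TT_per[of a m "v - c"] TT_per[of a m "v + c"] by (simp_all add: algebra_simps)

lemma TT_int: "a \<in> index_set X \<Longrightarrow> 1 \<le> m \<Longrightarrow> m \<le> tnum X a * l - 1 \<Longrightarrow> TT a m v = T a m v"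
  using tl_ge[of a] unfolding Tb_def index_set_def by auto

lemma TT_rel: assumes "a \<in> index_set X" "1 \<le> m" "m \<le> tnum X a * l - 1"
  shows "TT a m (u - 1 / of_nat (tnum X a)) * TT a m (u + 1 / of_nat (tnum X a)) =
          TT a (m - 1) u * TT a (m + 1) u + Mfun X TT a m u"
  using TS_at(3)[OF assms, of u] TT_int[OF assms] by simp

lemma int_facts: assumes "a \<in> index_set X" "1 \<le> m" "m \<le> tnum X a * l - 1"
  shows "TT a (m - 1) v dvd 1" "TT a (m + 1) v dvd 1" "TT a m v dvd 1"
  using assms TT_unit[of a "m - 1" v] TT_unit[of a "m + 1" v] TT_unit[of a m v] tl_ge[of a]
  by auto

lemma phi_int: assumes "a \<in> index_set X" "1 \<le> m" "m \<le> tnum X a * l - 1"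
  shows "YY a m u * (TT a (m - 1) u * TT a (m + 1) u) = Mfun X TT a m u"
proof -
  have "YY a m u * (TT a (m - 1) u * TT a (m + 1) u) =
     Mfun X TT a m u * (TT a (m - 1) u * uinv (TT a (m - 1) u)) * (TT a (m + 1) u * uinv (TT a (m + 1) u))"
    unfolding phiY_def by (simp add: ac_simps)
  then show ?thesis using uinv_r[OF int_facts(1)[OF assms]] uinv_r[OF int_facts(2)[OF assms]] by simp
qed

lemma onep: assumes "a \<in> index_set X" "1 \<le> m" "m \<le> tnum X a * l - 1"
  shows "(1 + YY a m u) * (TT a (m - 1) u * TT a (m + 1) u) =
     TT a m (u - 1 / of_nat (tnum X a)) * TT a m (u + 1 / of_nat (tnum X a))"
  using phi_int[OF assms, of u] TT_rel[OF assms, of u] by (simp add: algebra_simps)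

lemma onep_unit: assumes "a \<in> index_set X" "1 \<le> m" "m \<le> tnum X a * l - 1"
  shows "(1 + YY a m u) dvd 1"
proof -
  have "(1 + YY a m u) * (TT a (m - 1) u * TT a (m + 1) u) dvd 1"
    unfolding onep[OF assms] using int_facts(3)[OF assms] by (intro unit_mult)
  then show ?thesis using dvd_mult_left by blast
qed

lemma Q_mult: assumes "b = 0 \<or> (b \<in> index_set X \<and> 1 \<le> k \<and> k \<le> tnum X b * l - 1)"
  shows "(1 + Y0 YY b k v) * (TT b (k - 1) v * TT b (k + 1) v) =
     TT b k (v - 1 / of_nat (tnum X b)) * TT b k (v + 1 / of_nat (tnum X b))"
proof (cases "b = 0")
  case True then show ?thesis by (simp add: Y0_def)
next
  case False then show ?thesis using assms onep[of b k v] by (simp add: Y0_def)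
qed



lemma odd_div2[simp]: "odd m \<Longrightarrow> m \<le> 2 * l \<Longrightarrow> Suc (m div 2) \<le> l"
  by presburger

lemma TTz[simp]: "Tb Z l T b 0 v = 1" unfolding Tb_def by simp

lemma TTu: "b = 0 \<or> (b \<in> index_set X \<and> k \<le> tnum X b * l) \<Longrightarrow> TT b k v dvd 1"
  using TT_unit by auto
lemma TTu': "b \<le> rank X \<Longrightarrow> k \<le> tnum X b * l \<Longrightarrow> TT b k v dvd 1"
  using TT_unit[of b k v] by (cases "b = 0") (auto simp: index_set_def)
lemma TTp': "b \<le> rank X \<Longrightarrow> k \<le> tnum X b * l \<Longrightarrow> TT b k (v + p) = TT b k v"
  using TT_per[of b k v] by (cases "b = 0") (auto simp: index_set_def)
lemma TTp2': "b \<le> rank X \<Longrightarrow> k \<le> tnum X b * l \<Longrightarrow> TT b k (v + p - c) = TT b k (v - c)"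
  "b \<le> rank X \<Longrightarrow> k \<le> tnum X b * l \<Longrightarrow> TT b k (v + p + c) = TT b k (v + c)"
  using TT_per2[of b k v c] by (cases "b = 0"; auto simp: index_set_def)+
lemma TTp: "b = 0 \<or> (b \<in> index_set X \<and> k \<le> tnum X b * l) \<Longrightarrow> TT b k (v + p) = TT b k v"
  using TT_per by auto
lemma TTp2: "b = 0 \<or> (b \<in> index_set X \<and> k \<le> tnum X b * l) \<Longrightarrow> TT b k (v + p - c) = TT b k (v - c)"
  "b = 0 \<or> (b \<in> index_set X \<and> k \<le> tnum X b * l) \<Longrightarrow> TT b k (v + p + c) = TT b k (v + c)"
  using TT_per2 by auto

lemma args: "(u::complex) - 1/2 - 1/2 = u - 1" "u - 1/2 + 1/2 = u" "u + 1/2 - 1/2 = u" "u + 1/2 + 1/2 = u + 1"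
  "u - 1/3 - 2/3 = u - 1" "u - 1/3 + 2/3 = u + 1/3" "u + 1/3 - 2/3 = u - 1/3" "u + 1/3 + 2/3 = u + 1"
  "u - 1/3 - 1/3 = u - 2/3" "u - 1/3 + 1/3 = u" "u + 1/3 - 1/3 = u" "u + 1/3 + 1/3 = u + 2/3"
  "u - 2/3 - 1/3 = u - 1" "u - 2/3 + 1/3 = u - 1/3" "u + 2/3 - 1/3 = u + 1/3" "u + 2/3 + 1/3 = u + 1"
  by (simp_all add: field_simps)

lemma core_list:
  assumes "\<forall>x\<in>set L. case x of (b,k,v) \<Rightarrow> b = 0 \<or> (b \<in> index_set X \<and> 1 \<le> k \<and> k \<le> tnum X b * l - 1)"
  shows "prod_list (map (\<lambda>(b,k,v). TT b k (v - 1 / of_nat (tnum X b)) * TT b k (v + 1 / of_nat (tnum X b))) L)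
    = prod_list (map (\<lambda>(b,k,v). 1 + Y0 YY b k v) L) * prod_list (map (\<lambda>(b,k,v). TT b (k - 1) v * TT b (k + 1) v) L)"
  using assms
proof (induction L)
  case Nil then show ?case by simp
next
  case (Cons x L)
  obtain b k v where x: "x = (b,k,v)" by (cases x) auto
  have q: "(1 + Y0 YY b k v) * (TT b (k - 1) v * TT b (k + 1) v) =
     TT b k (v - 1 / of_nat (tnum X b)) * TT b k (v + 1 / of_nat (tnum X b))"
    using Cons.prems x by (intro Q_mult) auto
  have "(\<Prod>(b,k,v)\<leftarrow>x#L. TT b k (v - 1 / of_nat (tnum X b)) * TT b k (v + 1 / of_nat (tnum X b))) =
     (TT b k (v - 1 / of_nat (tnum X b)) * TT b k (v + 1 / of_nat (tnum X b))) *
     (\<Prod>(b,k,v)\<leftarrow>L. TT b k (v - 1 / of_nat (tnum X b)) * TT b k (v + 1 / of_nat (tnum X b)))"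
    using x by simp
  also have "\<dots> = ((1 + Y0 YY b k v) * (TT b (k - 1) v * TT b (k + 1) v)) *
     (prod_list (map (\<lambda>(b,k,v). 1 + Y0 YY b k v) L) * prod_list (map (\<lambda>(b,k,v). TT b (k - 1) v * TT b (k + 1) v) L))"
    using Cons q by simp
  also have "\<dots> = prod_list (map (\<lambda>(b,k,v). 1 + Y0 YY b k v) (x#L)) * prod_list (map (\<lambda>(b,k,v). TT b (k - 1) v * TT b (k + 1) v) (x#L))"
    using x by (simp add: mult_ac)
  finally show ?case .
qed

lemma core_via:
  assumes "\<forall>x\<in>set L. case x of (b,k,v) \<Rightarrow> b = 0 \<or> (b \<in> index_set X \<and> 1 \<le> k \<and> k \<le> tnum X b * l - 1)"
  and "Lhs = prod_list (map (\<lambda>(b,k,v). TT b k (v - 1 / of_nat (tnum X b)) * TT b k (v + 1 / of_nat (tnum X b))) L) * R"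
  and "Nn = prod_list (map (\<lambda>(b,k,v). 1 + Y0 YY b k v) L)"
  and "P1 * P2 = prod_list (map (\<lambda>(b,k,v). TT b (k - 1) v * TT b (k + 1) v) L) * R"
  shows "Lhs = Nn * P1 * P2"
proof -
  have "Lhs = (prod_list (map (\<lambda>(b,k,v). 1 + Y0 YY b k v) L) * prod_list (map (\<lambda>(b,k,v). TT b (k - 1) v * TT b (k + 1) v) L)) * R"
    using core_list[OF assms(1)] assms(2) by simp
  also have "\<dots> = prod_list (map (\<lambda>(b,k,v). 1 + Y0 YY b k v) L) * (prod_list (map (\<lambda>(b,k,v). TT b (k - 1) v * TT b (k + 1) v) L) * R)"
    by (simp only: mult.assoc)
  also have "\<dots> = Nn * (P1 * P2)" using assms(3,4) by simp
  finally show ?thesis by (simp only: mult.assoc)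
qed

lemma core_via2:
  assumes "\<forall>x\<in>set L. case x of (b,k,v) \<Rightarrow> b = 0 \<or> (b \<in> index_set X \<and> 1 \<le> k \<and> k \<le> tnum X b * l - 1)"
  and "Ra dvd 1"
  and "Lhs * Ra = prod_list (map (\<lambda>(b,k,v). TT b k (v - 1 / of_nat (tnum X b)) * TT b k (v + 1 / of_nat (tnum X b))) L) * Rb"
  and "Nn = prod_list (map (\<lambda>(b,k,v). 1 + Y0 YY b k v) L)"
  and "P1 * P2 * Ra = prod_list (map (\<lambda>(b,k,v). TT b (k - 1) v * TT b (k + 1) v) L) * Rb"
  shows "Lhs = Nn * P1 * P2"
proof (rule unit_cancel[OF assms(2)])
  have "Lhs * Ra = (prod_list (map (\<lambda>(b,k,v). 1 + Y0 YY b k v) L) * prod_list (map (\<lambda>(b,k,v). TT b (k - 1) v * TT b (k + 1) v) L)) * Rb"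
    using core_list[OF assms(1)] assms(3) by simp
  also have "\<dots> = prod_list (map (\<lambda>(b,k,v). 1 + Y0 YY b k v) L) * (prod_list (map (\<lambda>(b,k,v). TT b (k - 1) v * TT b (k + 1) v) L) * Rb)"
    by (simp only: mult.assoc)
  also have "\<dots> = Nn * (P1 * P2 * Ra)" using assms(4,5) by simp
  finally show "Lhs * Ra = Nn * P1 * P2 * Ra" by (simp only: mult.assoc)
qed



section \<open>Type B\<close>

lemma B_simps: assumes "X = B (s+2)"
  shows "\<And>F. Mfun X F = Mfun (B (s+2)) F" "\<And>F. Nfun X F = Nfun (B (s+2)) F"
    "tnum X = tnum (B (s+2))" "index_set X = {1..s+2}" "rank X = s+2"
  using assms by (simp_all add: index_set_def)

lemma B_M0: assumes "X = B (s+2)" "a \<in> index_set X" shows "Mfun X TT a 0 u = 1"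
  using assms(2-) by (auto simp: B_simps[OF assms(1)])

lemma B_Mtop: assumes "X = B (s+2)" "a \<in> index_set X" shows "Mfun X TT a (tnum X a * l) u = 1"
  using assms(2-) by (auto simp: B_simps[OF assms(1)] Tb_def)

lemma B_Munit: assumes "X = B (s+2)" "a \<in> index_set X" "m \<le> tnum X a * l"
  shows "Mfun X TT a m u dvd 1"
  using assms(2-) by (auto simp: B_simps[OF assms(1)] intro!: unit_mult TTu')

lemma B_Mper: assumes "X = B (s+2)" "a \<in> index_set X" "m \<le> tnum X a * l"
  shows "Mfun X TT a m (u + p) = Mfun X TT a m u"
  using assms(2-) by (auto simp: B_simps[OF assms(1)] TTp' TTp2')

lemma B_core1: assumes "X = B (s+2)" "1 \<le> a" "a \<le> s" "1 \<le> m" "m \<le> l - 1"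
 shows "Mfun X TT a m (u - 1) * Mfun X TT a m (u + 1) = Nfun X (Y0 YY) a m u * Mfun X TT a (m-1) u * Mfun X TT a (m+1) u"
  apply (rule core_via2[where L = "[(a-1, m, u), (a+1, m, u)]" and Ra = 1 and Rb = 1])
  using assms(2-) by (auto simp: args mult_ac B_simps[OF assms(1)] intro!: unit_mult TTu')

lemma B_core2: assumes "X = B (s+2)" "m = Suc i" "m \<le> l - 1"
 shows "Mfun X TT (s+1) m (u - 1) * Mfun X TT (s+1) m (u + 1) = Nfun X (Y0 YY) (s+1) m u * Mfun X TT (s+1) (m-1) u * Mfun X TT (s+1) (m+1) u"
  apply (rule core_via2[where L = "[(s, m, u), (s+2, 2*m-1, u), (s+2, 2*m+1, u), (s+2, 2*m, u-1/2), (s+2, 2*m, u+1/2)]"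
     and Ra = "TT (s+2) (2*m-1) (u-1/2) * TT (s+2) (2*m-1) (u+1/2) * TT (s+2) (2*m+1) (u-1/2) * TT (s+2) (2*m+1) (u+1/2)
        * TT (s+2) (2*m) u * TT (s+2) (2*m) u" and Rb = 1])
  using assms(2-) by (auto simp: args mult_ac B_simps[OF assms(1)] intro!: unit_mult TTu')

lemma B_core3: assumes "X = B (s+2)" "m = 2*(j+1)" "m \<le> 2*l - 1"
 shows "Mfun X TT (s+2) m (u - 1/2) * Mfun X TT (s+2) m (u + 1/2) = Nfun X (Y0 YY) (s+2) m u * Mfun X TT (s+2) (m-1) u * Mfun X TT (s+2) (m+1) u"
  apply (rule core_via2[where L = "[(s+1, j+1, u)]" and Ra = 1 and Rb = "TT (s+1) (j+1) u * TT (s+1) (j+1) u"])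
  using assms(2-) by (auto simp: args mult_ac B_simps[OF assms(1)] intro!: unit_mult TTu')

lemma B_core4: assumes "X = B (s+2)" "m = 2*j+1" "m \<le> 2*l - 1"
 shows "Mfun X TT (s+2) m (u - 1/2) * Mfun X TT (s+2) m (u + 1/2) = Nfun X (Y0 YY) (s+2) m u * Mfun X TT (s+2) (m-1) u * Mfun X TT (s+2) (m+1) u"
  apply (rule core_via2[where L = "[]" and Ra = 1 and Rb = "TT (s+1) j (u-1/2) * TT (s+1) j (u+1/2) * TT (s+1) (j+1) (u-1/2) * TT (s+1) (j+1) (u+1/2)"])
  using assms(2-) by (auto simp: args mult_ac B_simps[OF assms(1)] intro!: unit_mult TTu')

lemma B_core: assumes "X = B (s+2)" "a \<in> index_set X" "1 \<le> m" "m \<le> tnum X a * l - 1"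
 shows "Mfun X TT a m (u - 1 / of_nat (tnum X a)) * Mfun X TT a m (u + 1 / of_nat (tnum X a)) =
  Nfun X (Y0 YY) a m u * Mfun X TT a (m - 1) u * Mfun X TT a (m + 1) u"
proof -
  note S = B_simps[OF assms(1)]
  consider "1 \<le> a \<and> a \<le> s" | "a = s+1" | "a = s+2" using assms(2) S by fastforce
  then show ?thesis
  proof cases
    case 1 then show ?thesis using B_core1[OF assms(1), of a m u] assms S by simp
  next
    case 2 then show ?thesis using B_core2[OF assms(1), of m "m - 1" u] assms S by simp
  next
    case 3
    show ?thesis
    proof (cases "even m")
      case True
      then obtain k where k: "m = 2 * k" by blast
      then have "m = 2 * ((k - 1) + 1)" using assms(3) by (cases k) auto
      then obtain j where "m = 2 * (j + 1)" by blast
      then show ?thesis using B_core3[OF assms(1), of m j u] assms 3 S by simp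
    next
      case False
      then obtain j where "m = 2 * j + 1" using oddE by blast
      then show ?thesis using B_core4[OF assms(1), of m j u] assms 3 S by simp
    qed
  qed
qed

section \<open>Type C\<close>

lemma C_simps: assumes "X = C (s+2)"
  shows "\<And>F. Mfun X F = Mfun (C (s+2)) F" "\<And>F. Nfun X F = Nfun (C (s+2)) F"
    "tnum X = tnum (C (s+2))" "index_set X = {1..s+2}" "rank X = s+2"
  using assms by (simp_all add: index_set_def)

lemma C_M0: assumes "X = C (s+2)" "a \<in> index_set X" shows "Mfun X TT a 0 u = 1"
  using assms(2-) by (auto simp: C_simps[OF assms(1)])

lemma C_Mtop: assumes "X = C (s+2)" "a \<in> index_set X" shows "Mfun X TT a (tnum X a * l) u = 1"
  using assms(2-) by (auto simp: C_simps[OF assms(1)] Tb_def)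

lemma C_Munit: assumes "X = C (s+2)" "a \<in> index_set X" "m \<le> tnum X a * l"
  shows "Mfun X TT a m u dvd 1"
  using assms(2-) by (auto simp: C_simps[OF assms(1)] intro!: unit_mult TTu')

lemma C_Mper: assumes "X = C (s+2)" "a \<in> index_set X" "m \<le> tnum X a * l"
  shows "Mfun X TT a m (u + p) = Mfun X TT a m u"
proof (cases "1 \<le> a \<and> a \<le> s")
  case True
  have "TT (a - 1) m (u + p) = TT (a - 1) m u"
    by (rule TTp') (use True assms in \<open>auto simp: C_simps[OF assms(1)]\<close>)
  then show ?thesis using True assms(2-) by (auto simp: C_simps[OF assms(1)] TTp' TTp2')
next
  case False
  then show ?thesis using assms(2-) by (auto simp: C_simps[OF assms(1)] TTp' TTp2')
qed

lemma C_core1: assumes "X = C (s+2)" "1 \<le> a" "a \<le> s" "1 \<le> m" "m \<le> 2 * l - 1"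
 shows "Mfun X TT a m (u - 1/2) * Mfun X TT a m (u + 1/2) = Nfun X (Y0 YY) a m u * Mfun X TT a (m-1) u * Mfun X TT a (m+1) u"
  apply (rule core_via2[where L = "[(a-1, m, u), (a+1, m, u)]" and Ra = 1 and Rb = 1])
  using assms(2-) by (auto simp: args mult_ac C_simps[OF assms(1)] intro!: unit_mult TTu')

lemma C_core2: assumes "X = C (s+2)" "m = 2*(j+1)" "m \<le> 2*l - 1"
 shows "Mfun X TT (s+1) m (u - 1/2) * Mfun X TT (s+1) m (u + 1/2) = Nfun X (Y0 YY) (s+1) m u * Mfun X TT (s+1) (m-1) u * Mfun X TT (s+1) (m+1) u"
  apply (rule core_via2[where L = "[(s, m, u), (s+2, j+1, u)]" and Ra = 1 and Rb = "TT (s+2) (j+1) u * TT (s+2) (j+1) u"])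
  using assms(2-) by (auto simp: args mult_ac C_simps[OF assms(1)] intro!: unit_mult TTu')

lemma C_core3: assumes "X = C (s+2)" "m = 2*j+1" "m \<le> 2*l - 1"
 shows "Mfun X TT (s+1) m (u - 1/2) * Mfun X TT (s+1) m (u + 1/2) = Nfun X (Y0 YY) (s+1) m u * Mfun X TT (s+1) (m-1) u * Mfun X TT (s+1) (m+1) u"
  apply (rule core_via2[where L = "[(s, m, u)]" and Ra = 1 and Rb = "TT (s+2) j (u-1/2) * TT (s+2) j (u+1/2) * TT (s+2) (j+1) (u-1/2) * TT (s+2) (j+1) (u+1/2)"])
  using assms(2-) by (auto simp: args mult_ac C_simps[OF assms(1)] intro!: unit_mult TTu')

lemma C_core4: assumes "X = C (s+2)" "m = Suc i" "m \<le> l - 1"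
 shows "Mfun X TT (s+2) m (u - 1) * Mfun X TT (s+2) m (u + 1) = Nfun X (Y0 YY) (s+2) m u * Mfun X TT (s+2) (m-1) u * Mfun X TT (s+2) (m+1) u"
  apply (rule core_via2[where L = "[(s+1, 2*m-1, u), (s+1, 2*m+1, u), (s+1, 2*m, u-1/2), (s+1, 2*m, u+1/2)]"
     and Ra = "TT (s+1) (2*m-1) (u-1/2) * TT (s+1) (2*m-1) (u+1/2) * TT (s+1) (2*m+1) (u-1/2) * TT (s+1) (2*m+1) (u+1/2)
        * TT (s+1) (2*m) u * TT (s+1) (2*m) u" and Rb = 1])
  using assms(2-) by (auto simp: args mult_ac C_simps[OF assms(1)] intro!: unit_mult TTu')

lemma C_core: assumes "X = C (s+2)" "a \<in> index_set X" "1 \<le> m" "m \<le> tnum X a * l - 1"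
 shows "Mfun X TT a m (u - 1 / of_nat (tnum X a)) * Mfun X TT a m (u + 1 / of_nat (tnum X a)) =
  Nfun X (Y0 YY) a m u * Mfun X TT a (m - 1) u * Mfun X TT a (m + 1) u"
proof -
  note S = C_simps[OF assms(1)]
  consider "1 \<le> a \<and> a \<le> s" | "a = s+1" | "a = s+2" using assms(2) S by fastforce
  then show ?thesis
  proof cases
    case 1 then show ?thesis using C_core1[OF assms(1), of a m u] assms S by simp
  next
    case 2
    show ?thesis
    proof (cases "even m")
      case True
      then obtain k where k: "m = 2 * k" by blast
      then have "m = 2 * ((k - 1) + 1)" using assms(3) by (cases k) auto
      then obtain j where "m = 2 * (j + 1)" by blast
      then show ?thesis using C_core2[OF assms(1), of m j u] assms 2 S by simp
    next
      case False
      then obtain j where "m = 2 * j + 1" using oddE by blast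
      then show ?thesis using C_core3[OF assms(1), of m j u] assms 2 S by simp
    qed
  next
    case 3 then show ?thesis using C_core4[OF assms(1), of m "m - 1" u] assms S by simp
  qed
qed

section \<open>Type F4\<close>

lemma F_simps: assumes "X = F4"
  shows "\<And>F. Mfun X F = Mfun F4 F" "\<And>F. Nfun X F = Nfun F4 F"
    "tnum X = tnum F4" "index_set X = {1..4}" "rank X = 4"
  using assms by (simp_all add: index_set_def)

lemma F_M0: assumes "X = F4" "a \<in> index_set X" shows "Mfun X TT a 0 u = 1"
  using assms(2-) by (auto simp: F_simps[OF assms(1)])

lemma F_Mtop: assumes "X = F4" "a \<in> index_set X" shows "Mfun X TT a (tnum X a * l) u = 1"
  using assms(2-) by (auto simp: F_simps[OF assms(1)] Tb_def)

lemma F_Munit: assumes "X = F4" "a \<in> index_set X" "m \<le> tnum X a * l"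
  shows "Mfun X TT a m u dvd 1"
  using assms(2-) by (auto simp: F_simps[OF assms(1)] intro!: unit_mult TTu')

lemma F_Mper: assumes "X = F4" "a \<in> index_set X" "m \<le> tnum X a * l"
  shows "Mfun X TT a m (u + p) = Mfun X TT a m u"
  using assms(2-) by (auto simp: F_simps[OF assms(1)] TTp' TTp2')

lemma F_core1: assumes "X = F4" "1 \<le> m" "m \<le> l - 1"
 shows "Mfun X TT 1 m (u - 1) * Mfun X TT 1 m (u + 1) = Nfun X (Y0 YY) 1 m u * Mfun X TT 1 (m-1) u * Mfun X TT 1 (m+1) u"
  apply (rule core_via2[where L = "[(2, m, u)]" and Ra = 1 and Rb = 1])
  using assms(2-) by (auto simp: args mult_ac F_simps[OF assms(1)] intro!: unit_mult TTu')

lemma F_core2: assumes "X = F4" "m = Suc i" "m \<le> l - 1"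
 shows "Mfun X TT 2 m (u - 1) * Mfun X TT 2 m (u + 1) = Nfun X (Y0 YY) 2 m u * Mfun X TT 2 (m-1) u * Mfun X TT 2 (m+1) u"
  apply (rule core_via2[where L = "[(1, m, u), (3, 2*m-1, u), (3, 2*m+1, u), (3, 2*m, u-1/2), (3, 2*m, u+1/2)]"
     and Ra = "TT 3 (2*m-1) (u-1/2) * TT 3 (2*m-1) (u+1/2) * TT 3 (2*m+1) (u-1/2) * TT 3 (2*m+1) (u+1/2)
        * TT 3 (2*m) u * TT 3 (2*m) u" and Rb = 1])
  using assms(2-) by (auto simp: args mult_ac F_simps[OF assms(1)] intro!: unit_mult TTu')

lemma F_core3: assumes "X = F4" "m = 2*(j+1)" "m \<le> 2*l - 1"
 shows "Mfun X TT 3 m (u - 1/2) * Mfun X TT 3 m (u + 1/2) = Nfun X (Y0 YY) 3 m u * Mfun X TT 3 (m-1) u * Mfun X TT 3 (m+1) u"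
  apply (rule core_via2[where L = "[(2, j+1, u), (4, m, u)]" and Ra = 1 and Rb = "TT 2 (j+1) u * TT 2 (j+1) u"])
  using assms(2-) by (auto simp: args mult_ac F_simps[OF assms(1)] intro!: unit_mult TTu')

lemma F_core4: assumes "X = F4" "m = 2*j+1" "m \<le> 2*l - 1"
 shows "Mfun X TT 3 m (u - 1/2) * Mfun X TT 3 m (u + 1/2) = Nfun X (Y0 YY) 3 m u * Mfun X TT 3 (m-1) u * Mfun X TT 3 (m+1) u"
  apply (rule core_via2[where L = "[(4, m, u)]" and Ra = 1 and Rb = "TT 2 j (u-1/2) * TT 2 j (u+1/2) * TT 2 (j+1) (u-1/2) * TT 2 (j+1) (u+1/2)"])
  using assms(2-) by (auto simp: args mult_ac F_simps[OF assms(1)] intro!: unit_mult TTu')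

lemma F_core5: assumes "X = F4" "1 \<le> m" "m \<le> 2 * l - 1"
 shows "Mfun X TT 4 m (u - 1/2) * Mfun X TT 4 m (u + 1/2) = Nfun X (Y0 YY) 4 m u * Mfun X TT 4 (m-1) u * Mfun X TT 4 (m+1) u"
  apply (rule core_via2[where L = "[(3, m, u)]" and Ra = 1 and Rb = 1])
  using assms(2-) by (auto simp: args mult_ac F_simps[OF assms(1)] intro!: unit_mult TTu')

lemma F_core: assumes "X = F4" "a \<in> index_set X" "1 \<le> m" "m \<le> tnum X a * l - 1"
 shows "Mfun X TT a m (u - 1 / of_nat (tnum X a)) * Mfun X TT a m (u + 1 / of_nat (tnum X a)) =
  Nfun X (Y0 YY) a m u * Mfun X TT a (m - 1) u * Mfun X TT a (m + 1) u"
proof -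
  note S = F_simps[OF assms(1)]
  consider "a = 1" | "a = 2" | "a = 3" | "a = 4" using assms(2) S by fastforce
  then show ?thesis
  proof cases
    case 1 then show ?thesis using F_core1[OF assms(1), of m u] assms S by simp
  next
    case 2 then show ?thesis using F_core2[OF assms(1), of m "m - 1" u] assms S by simp
  next
    case 3
    show ?thesis
    proof (cases "even m")
      case True
      then obtain k where k: "m = 2 * k" by blast
      then have "m = 2 * ((k - 1) + 1)" using assms(3) by (cases k) auto
      then obtain j where "m = 2 * (j + 1)" by blast
      then show ?thesis using F_core3[OF assms(1), of m j u] assms 3 S by simp
    next
      case False
      then obtain j where "m = 2 * j + 1" using oddE by blast
      then show ?thesis using F_core4[OF assms(1), of m j u] assms 3 S by simp
    qed
  next
    case 4 then show ?thesis using F_core5[OF assms(1), of m u] assms S by simp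
  qed
qed

section \<open>Type G2\<close>

lemma mod3_1[simp]: "m mod 3 = Suc 0 \<Longrightarrow> m \<le> 3 * l \<Longrightarrow> Suc (m div 3) \<le> l" by presburger
lemma mod3_2[simp]: "m mod 3 = 2 \<Longrightarrow> m \<le> 3 * l \<Longrightarrow> Suc (m div 3) \<le> l" by presburger
lemma mod3_0[simp]: "m \<le> 3 * l \<Longrightarrow> m div 3 \<le> l" by presburger

lemma divmod3[simp]: "Suc (k*3) div 3 = k" "Suc (k*3) mod 3 = 1" "Suc (Suc (k*3)) div 3 = k" "Suc (Suc (k*3)) mod 3 = 2"
  "Suc (Suc (Suc (k*3))) div 3 = Suc k" "Suc (Suc (Suc (k*3))) mod 3 = 0"
  "Suc (Suc (Suc (Suc (k*3)))) div 3 = Suc k" "Suc (Suc (Suc (Suc (k*3)))) mod 3 = 1"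
  "(3 + k*3) div 3 = Suc k" "(3 + k*3) mod 3 = 0" "(k*3) div 3 = k" "(k*3) mod 3 = 0"
  by presburger+

lemma G_simps: assumes "X = G2"
  shows "\<And>F. Mfun X F = Mfun G2 F" "\<And>F. Nfun X F = Nfun G2 F"
    "tnum X = tnum G2" "index_set X = {1..2}" "rank X = 2"
  using assms by (simp_all add: index_set_def)

lemma G_M0: assumes "X = G2" "a \<in> index_set X" shows "Mfun X TT a 0 u = 1"
  using assms(2-) by (auto simp: G_simps[OF assms(1)])

lemma G_Mtop: assumes "X = G2" "a \<in> index_set X" shows "Mfun X TT a (tnum X a * l) u = 1"
  using assms(2-) by (auto simp: G_simps[OF assms(1)] Tb_def)

lemma G_Munit: assumes "X = G2" "a \<in> index_set X" "m \<le> tnum X a * l"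
  shows "Mfun X TT a m u dvd 1"
  using assms(2-) by (auto simp: G_simps[OF assms(1)] intro!: unit_mult TTu')

lemma G_Mper: assumes "X = G2" "a \<in> index_set X" "m \<le> tnum X a * l"
  shows "Mfun X TT a m (u + p) = Mfun X TT a m u"
  using assms(2-) by (auto simp: G_simps[OF assms(1)] TTp' TTp2')

lemma s3: "Suc (Suc (Suc (i * 3))) = 3 + i * 3" by simp

lemma G_core1: assumes "X = G2" "m = Suc i" "m \<le> l - 1"
 shows "Mfun X TT 1 m (u - 1) * Mfun X TT 1 m (u + 1) = Nfun X (Y0 YY) 1 m u * Mfun X TT 1 (m-1) u * Mfun X TT 1 (m+1) u"
  apply (rule core_via2[where L = "[(2, 3*m-2, u), (2, 3*m+2, u), (2, 3*m, u), (2, 3*m-1, u-1/3), (2, 3*m-1, u+1/3),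
      (2, 3*m+1, u-1/3), (2, 3*m+1, u+1/3), (2, 3*m, u-2/3), (2, 3*m, u+2/3)]"
     and Ra = "TT 2 (3*m-2) (u-1/3) * TT 2 (3*m-2) (u+1/3) * TT 2 (3*m+2) (u-1/3) * TT 2 (3*m+2) (u+1/3)
       * TT 2 (3*m) (u-1/3) * TT 2 (3*m) (u+1/3) * TT 2 (3*m) (u-1/3) * TT 2 (3*m) (u+1/3)
       * TT 2 (3*m-1) (u-2/3) * TT 2 (3*m-1) (u+2/3) * TT 2 (3*m+1) (u-2/3) * TT 2 (3*m+1) (u+2/3)
       * TT 2 (3*m-1) u * TT 2 (3*m-1) u * TT 2 (3*m+1) u * TT 2 (3*m+1) u" and Rb = 1])
  using assms(2-) by (auto simp: args mult_ac G_simps[OF assms(1)] s3 intro!: unit_mult TTu')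

lemma G_core2: assumes "X = G2" "m = 3*(k+1)" "m \<le> 3*l - 1"
 shows "Mfun X TT 2 m (u - 1/3) * Mfun X TT 2 m (u + 1/3) = Nfun X (Y0 YY) 2 m u * Mfun X TT 2 (m-1) u * Mfun X TT 2 (m+1) u"
  apply (rule core_via2[where L = "[(1, k+1, u)]" and Ra = 1 and Rb = "TT 1 (k+1) (u-1/3) * TT 1 (k+1) (u+1/3) * TT 1 (k+1) (u-1/3) * TT 1 (k+1) (u+1/3)"])
  using assms(2-) by (auto simp: args mult_ac G_simps[OF assms(1)] intro!: unit_mult TTu')

lemma G_core3: assumes "X = G2" "m = 3*k+1" "m \<le> 3*l - 1"
 shows "Mfun X TT 2 m (u - 1/3) * Mfun X TT 2 m (u + 1/3) = Nfun X (Y0 YY) 2 m u * Mfun X TT 2 (m-1) u * Mfun X TT 2 (m+1) u"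
  apply (rule core_via2[where L = "[]" and Ra = 1 and Rb = "TT 1 k (u-2/3) * TT 1 k u * TT 1 (k+1) (u-1/3) * TT 1 k u * TT 1 k (u+2/3) * TT 1 (k+1) (u+1/3)"])
  using assms(2-) by (auto simp: args mult_ac G_simps[OF assms(1)] intro!: unit_mult TTu')

lemma G_core4: assumes "X = G2" "m = 3*k+2" "m \<le> 3*l - 1"
 shows "Mfun X TT 2 m (u - 1/3) * Mfun X TT 2 m (u + 1/3) = Nfun X (Y0 YY) 2 m u * Mfun X TT 2 (m-1) u * Mfun X TT 2 (m+1) u"
  apply (rule core_via2[where L = "[]" and Ra = 1 and Rb = "TT 1 k (u-1/3) * TT 1 (k+1) (u-2/3) * TT 1 (k+1) u * TT 1 k (u+1/3) * TT 1 (k+1) u * TT 1 (k+1) (u+2/3)"])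
  using assms(2-) by (auto simp: args mult_ac G_simps[OF assms(1)] intro!: unit_mult TTu')

lemma G_core: assumes "X = G2" "a \<in> index_set X" "1 \<le> m" "m \<le> tnum X a * l - 1"
 shows "Mfun X TT a m (u - 1 / of_nat (tnum X a)) * Mfun X TT a m (u + 1 / of_nat (tnum X a)) =
  Nfun X (Y0 YY) a m u * Mfun X TT a (m - 1) u * Mfun X TT a (m + 1) u"
proof -
  note S = G_simps[OF assms(1)]
  consider "a = 1" | "a = 2" using assms(2) S by fastforce
  then show ?thesis
  proof cases
    case 1 then show ?thesis using G_core1[OF assms(1), of m "m - 1" u] assms S by simp
  next
    case 2
    note a2 = this
    consider "m mod 3 = 0" | "m mod 3 = 1" | "m mod 3 = 2" by linarith
    then show ?thesis
    proof cases
      case 1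
      then obtain k where "m = 3 * k" by blast
      then have "m = 3 * ((k - 1) + 1)" using assms(3) by (cases k) auto
      then obtain j where "m = 3 * (j + 1)" by blast
      then show ?thesis using G_core2[OF assms(1), of m j u] assms a2 S by simp
    next
      case 3
      then have "m = 3 * (m div 3) + 2" by presburger
      then show ?thesis using G_core4[OF assms(1), of m "m div 3" u] assms a2 S by simp
    next
      case 2
      then have "m = 3 * (m div 3) + 1" by presburger
      then show ?thesis using G_core3[OF assms(1), of m "m div 3" u] assms a2 S by simp
    qed
  qed
qed

section \<open>Simply laced\<close>

lemma SL_M0: assumes "sl X" "a \<in> index_set X" shows "Mfun X TT a 0 u = 1"
  by (simp add: sl_simps[OF assms(1)])

lemma SL_Mtop: assumes "sl X" "a \<in> index_set X" shows "Mfun X TT a (tnum X a * l) u = 1"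
  by (simp add: sl_simps[OF assms(1)] Tb_def)

lemma SL_Munit: assumes "sl X" "a \<in> index_set X" "m \<le> tnum X a * l"
  shows "Mfun X TT a m u dvd 1"
  unfolding sl_simps[OF assms(1)] using assms(3)
  by (intro prod_unit TT_unit) (auto simp: sl_simps[OF assms(1)])

lemma SL_Mper: assumes "sl X" "a \<in> index_set X" "m \<le> tnum X a * l"
  shows "Mfun X TT a m (u + p) = Mfun X TT a m u"
  unfolding sl_simps[OF assms(1)] using assms(3)
  by (intro prod.cong refl TT_per) (auto simp: sl_simps[OF assms(1)])

lemma SL_core: assumes "sl X" "a \<in> index_set X" "1 \<le> m" "m \<le> tnum X a * l - 1"
 shows "Mfun X TT a m (u - 1 / of_nat (tnum X a)) * Mfun X TT a m (u + 1 / of_nat (tnum X a)) =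
  Nfun X (Y0 YY) a m u * Mfun X TT a (m - 1) u * Mfun X TT a (m + 1) u"
proof -
  let ?S = "{b \<in> index_set X. adj X a b}"
  have "Mfun X TT a m (u - 1 / of_nat (tnum X a)) * Mfun X TT a m (u + 1 / of_nat (tnum X a)) =
     (\<Prod>b\<in>?S. TT b m (u - 1) * TT b m (u + 1))"
    by (simp add: sl_simps[OF assms(1)] prod.distrib)
  also have "\<dots> = (\<Prod>b\<in>?S. (1 + Y0 YY b m u) * (TT b (m - 1) u * TT b (m + 1) u))"
  proof (rule prod.cong[OF refl])
    fix b assume "b \<in> ?S"
    then show "TT b m (u - 1) * TT b m (u + 1) = (1 + Y0 YY b m u) * (TT b (m - 1) u * TT b (m + 1) u)"
      using Q_mult[of b m u] assms by (simp add: sl_simps[OF assms(1)])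
  qed
  also have "\<dots> = Nfun X (Y0 YY) a m u * Mfun X TT a (m - 1) u * Mfun X TT a (m + 1) u"
    by (simp add: sl_simps[OF assms(1)] prod.distrib mult.assoc)
  finally show ?thesis .
qed

lemma X_cases:
  obtains (sl) "sl X" | (B) s where "X = B (s+2)" | (C) s where "X = C (s+2)" | (F) "X = F4" | (G) "X = G2"
proof (cases X)
  case (B r) then have "r \<ge> 2" using ft by simp
  then have "X = B ((r - 2) + 2)" using B by simp
  then show ?thesis using that by blast
next
  case (C r) then have "r \<ge> 2" using ft by simp
  then have "X = C ((r - 2) + 2)" using C by simp
  then show ?thesis using that by blast
qed (use that in \<open>auto simp: sl_def\<close>)

lemma M0: assumes "a \<in> index_set X"
  shows "Mfun X TT a 0 u = 1"
proof (cases rule: X_cases)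
  case sl show ?thesis by (rule SL_M0[OF sl assms])
next
  case (B s) show ?thesis by (rule B_M0[OF B assms])
next
  case (C s) show ?thesis by (rule C_M0[OF C assms])
next
  case F show ?thesis by (rule F_M0[OF F assms])
next
  case G show ?thesis by (rule G_M0[OF G assms])
qed

lemma Mtop: assumes "a \<in> index_set X"
  shows "Mfun X TT a (tnum X a * l) u = 1"
proof (cases rule: X_cases)
  case sl show ?thesis by (rule SL_Mtop[OF sl assms])
next
  case (B s) show ?thesis by (rule B_Mtop[OF B assms])
next
  case (C s) show ?thesis by (rule C_Mtop[OF C assms])
next
  case F show ?thesis by (rule F_Mtop[OF F assms])
next
  case G show ?thesis by (rule G_Mtop[OF G assms])
qed

lemma Munit: assumes "a \<in> index_set X" "m \<le> tnum X a * l"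
  shows "Mfun X TT a m u dvd 1"
proof (cases rule: X_cases)
  case sl show ?thesis by (rule SL_Munit[OF sl assms])
next
  case (B s) show ?thesis by (rule B_Munit[OF B assms])
next
  case (C s) show ?thesis by (rule C_Munit[OF C assms])
next
  case F show ?thesis by (rule F_Munit[OF F assms])
next
  case G show ?thesis by (rule G_Munit[OF G assms])
qed

lemma Mper: assumes "a \<in> index_set X" "m \<le> tnum X a * l"
  shows "Mfun X TT a m (u + p) = Mfun X TT a m u"
proof (cases rule: X_cases)
  case sl show ?thesis by (rule SL_Mper[OF sl assms])
next
  case (B s) show ?thesis by (rule B_Mper[OF B assms])
next
  case (C s) show ?thesis by (rule C_Mper[OF C assms])
next
  case F show ?thesis by (rule F_Mper[OF F assms])
next
  case G show ?thesis by (rule G_Mper[OF G assms])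
qed

lemma core: assumes "a \<in> index_set X" "1 \<le> m" "m \<le> tnum X a * l - 1"
  shows "Mfun X TT a m (u - 1 / of_nat (tnum X a)) * Mfun X TT a m (u + 1 / of_nat (tnum X a)) =
  Nfun X (Y0 YY) a m u * Mfun X TT a (m - 1) u * Mfun X TT a (m + 1) u"
proof (cases rule: X_cases)
  case sl show ?thesis by (rule SL_core[OF sl assms])
next
  case (B s) show ?thesis by (rule B_core[OF B assms])
next
  case (C s) show ?thesis by (rule C_core[OF C assms])
next
  case F show ?thesis by (rule F_core[OF F assms])
next
  case G show ?thesis by (rule G_core[OF G assms])
qed

lemma phi_unit: assumes "a \<in> index_set X" "1 \<le> m" "m \<le> tnum X a * l - 1"
  shows "YY a m u dvd 1"
  using assms Munit[of a m u] uinv_dvd[OF int_facts(1)[OF assms]] uinv_dvd[OF int_facts(2)[OF assms]]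
  unfolding phiY_def by (intro unit_mult) auto

lemma Yinvb_rel: assumes "a \<in> index_set X" "k \<le> tnum X a * l"
  shows "(1 + Yinvb X l YY a k u) * Mfun X TT a k u =
    TT a k (u - 1 / of_nat (tnum X a)) * TT a k (u + 1 / of_nat (tnum X a))"
proof (cases "k = 0 \<or> k = tnum X a * l")
  case True
  then show ?thesis using M0[OF assms(1)] Mtop[OF assms(1)] by (auto simp: Yinvb_def Tb_def)
next
  case False
  then have i: "1 \<le> k" "k \<le> tnum X a * l - 1" using assms by auto
  have "YY a k u * (TT a (k - 1) u * TT a (k + 1) u * uinv (Mfun X TT a k u)) =
     (YY a k u * (TT a (k - 1) u * TT a (k + 1) u)) * uinv (Mfun X TT a k u)"
    by (simp only: mult.assoc)
  also have "\<dots> = 1" 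
    using phi_int[OF assms(1) i, of u] uinv_r[OF Munit[OF assms, of u]] by simp
  finally have "YY a k u * (TT a (k - 1) u * TT a (k + 1) u * uinv (Mfun X TT a k u)) = 1" .
  then have "uinv (YY a k u) = TT a (k - 1) u * TT a (k + 1) u * uinv (Mfun X TT a k u)"
    by (rule uinv_unique)
  then have e: "Yinvb X l YY a k u = TT a (k - 1) u * TT a (k + 1) u * uinv (Mfun X TT a k u)"
    using False by (simp add: Yinvb_def)
  have "(1 + Yinvb X l YY a k u) * Mfun X TT a k u =
     Mfun X TT a k u + TT a (k - 1) u * TT a (k + 1) u * (uinv (Mfun X TT a k u) * Mfun X TT a k u)"
    unfolding e by (simp only: distrib_right mult.assoc mult_1_left)
  also have "\<dots> = TT a (k - 1) u * TT a (k + 1) u + Mfun X TT a k u"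
    using uinv_l[OF Munit[OF assms, of u]] by simp
  finally show ?thesis using TT_rel[OF assms(1) i, of u] by simp
qed

lemma main_rel: assumes "a \<in> index_set X" "1 \<le> m" "m \<le> tnum X a * l - 1"
  shows "YY a m (u - 1 / of_nat (tnum X a)) * YY a m (u + 1 / of_nat (tnum X a)) =
          Nfun X (Y0 YY) a m u *
          uinv ((1 + Yinvb X l YY a (m - 1) u) * (1 + Yinvb X l YY a (m + 1) u))"
proof -
  let ?c = "1 / of_nat (tnum X a) :: complex"
  have k1: "m - 1 \<le> tnum X a * l" "m + 1 \<le> tnum X a * l" using assms by auto
  note R1 = Yinvb_rel[OF assms(1) k1(1), of u] and R2 = Yinvb_rel[OF assms(1) k1(2), of u]
  have U1: "Mfun X TT a (m - 1) u dvd 1" "Mfun X TT a (m + 1) u dvd 1"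
    using Munit[OF assms(1) k1(1)] Munit[OF assms(1) k1(2)] by auto
  have P1: "(1 + Yinvb X l YY a (m - 1) u) dvd 1"
  proof -
    have "(1 + Yinvb X l YY a (m - 1) u) * Mfun X TT a (m - 1) u dvd 1"
      unfolding R1 using assms k1 by (intro unit_mult TT_unit) auto
    then show ?thesis using dvd_mult_left by blast
  qed
  have P2: "(1 + Yinvb X l YY a (m + 1) u) dvd 1"
  proof -
    have "(1 + Yinvb X l YY a (m + 1) u) * Mfun X TT a (m + 1) u dvd 1"
      unfolding R2 using assms k1 by (intro unit_mult TT_unit) auto
    then show ?thesis using dvd_mult_left by blast
  qed
  let ?L = "YY a m (u - ?c) * YY a m (u + ?c)"
  let ?P1 = "1 + Yinvb X l YY a (m - 1) u" and ?P2 = "1 + Yinvb X l YY a (m + 1) u"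
  let ?M1 = "Mfun X TT a (m - 1) u" and ?M2 = "Mfun X TT a (m + 1) u"
  have "?L * ?P1 * ?P2 * (?M1 * ?M2) = ?L * (?P1 * ?M1) * (?P2 * ?M2)" by (simp add: ac_simps)
  also have "\<dots> = (YY a m (u - ?c) * (TT a (m - 1) (u - ?c) * TT a (m + 1) (u - ?c))) *
      (YY a m (u + ?c) * (TT a (m - 1) (u + ?c) * TT a (m + 1) (u + ?c)))"
    unfolding R1 R2 by (simp add: ac_simps)
  also have "\<dots> = Mfun X TT a m (u - ?c) * Mfun X TT a m (u + ?c)"
    using phi_int[OF assms] by simp
  also have "\<dots> = Nfun X (Y0 YY) a m u * (?M1 * ?M2)" using core[OF assms, of u] by (simp add: ac_simps)
  finally have fin: "?L * ?P1 * ?P2 * (?M1 * ?M2) = Nfun X (Y0 YY) a m u * (?M1 * ?M2)" .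
  have "?L * (?P1 * ?P2) = Nfun X (Y0 YY) a m u"
    by (rule unit_cancel[OF unit_mult[OF U1]]) (metis fin mult.assoc)
  then have "?L * (?P1 * ?P2) * uinv (?P1 * ?P2) = Nfun X (Y0 YY) a m u * uinv (?P1 * ?P2)" by simp
  moreover have "?L * (?P1 * ?P2) * uinv (?P1 * ?P2) = ?L * ((?P1 * ?P2) * uinv (?P1 * ?P2))"
    by (simp only: mult.assoc)
  ultimately show ?thesis using uinv_r[OF unit_mult[OF P1 P2]] by simp
qed

lemma phi_per: assumes "a \<in> index_set X" "1 \<le> m" "m \<le> tnum X a * l - 1"
  shows "YY a m (u + p) = YY a m u"
proof -
  have "m - 1 \<le> tnum X a * l" "m + 1 \<le> tnum X a * l" "m \<le> tnum X a * l" using assms by auto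
  then show ?thesis
  using assms Mper[of a m u] TT_per[of a "m - 1" u] TT_per[of a "m + 1" u]
  unfolding phiY_def by simp
qed

lemma Ysys: "Y_system X l p YY"
  unfolding Y_system_def
proof (intro ballI allI impI conjI)
  fix a m u assume a: "a \<in> index_set X" and m: "1 \<le> m \<and> m \<le> tnum X a * l - 1"
  show "YY a m (u + p) = YY a m u" using phi_per a m by blast
  show "YY a m u dvd 1" using phi_unit a m by blast
  show "(1 + YY a m u) dvd 1" using onep_unit a m by blast
  show "YY a m (u - 1 / of_nat (tnum X a)) * YY a m (u + 1 / of_nat (tnum X a)) =
          Nfun X (Y0 YY) a m u * uinv ((1 + Yinvb X l YY a (m - 1) u) * (1 + Yinvb X l YY a (m + 1) u))"
    using main_rel a m by blast
qed

end

theorem proposition3p8: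
  fixes X :: dynkin and l :: nat and p :: complex
    and T :: "nat \<Rightarrow> nat \<Rightarrow> complex \<Rightarrow> 'r::comm_ring_1"
  assumes "finite_type X" and "l \<ge> 2" and "valid_period p"
    and "T_system X l p T"
  shows "Y_system X l p (phiY X l T)"
proof -
  interpret tsys X l p T using assms by unfold_locales
  show ?thesis by (rule Ysys)
qed

end
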